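(* Let $\mathcal{M}$ be the class of structures over $\Sigma_{md,\bot}$ that satisfy all equations of $\mathsf{Md}_\bot$, the Normal Value Law and the Additional Value Law, and in which $0\neq 1$. The models in $\mathcal{M}$ are in one-to-one correspondence with the involutive cancellation meadows (models of $\mathsf{Md}$ satisfying the cancellation law), via the following correspondence: an involutive cancellation meadow is extended by a new element $\hat\bot$ interpreting $\bot$, all operations applied to $\hat\bot$ yield $\hat\bot$ and $0^{-1}$ is redefined as $\hat\bot$, giving a model in $\mathcal{M}$; conversely, from $M\in\mathcal{M}$ one removes the interpretation $\hat\bot$ of $\bot$ and sets $0^{-1}=0$, obtaining an involutive cancellation meadow.
   Context: The signature $\Sigma_{md,\bot}$ has one sort, constants $0,1,\bot$, binary operations $+,\cdot$ and unary operations $-$ and $(\,\cdot\,)^{-1}$; $\Sigma_{md}$ is the same signature without $\bot$. $\mathsf{Md}_\bot$ is the set of equations: $(x+y)+z=x+(y+z)$; $x+y=y+x$; $x+0=x$; $x+(-x)=0\cdot x$; $(x\cdot y)\cdot z=x\cdot(y\cdot z)$; $x\cdot y=y\cdot x$; $1\cdot x=x$; $x\cdot(y+z)=x\cdot y+x\cdot z$; $-(-x)=x$; $0\cdot(x\cdot x)=0\cdot x$; $(x^{-1})^{-1}=x+0\cdot x^{-1}$; $x\cdot x^{-1}=1+0\cdot x^{-1}$; $(x\cdot y)^{-1}=x^{-1}\cdot y^{-1}$; $1^{-1}=1$; $0^{-1}=\bot$; $x+\bot=\bot$; $x\cdot\bot=\bot$. Normal Value Law: $x\neq\bot\rightarrow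 0\cdot x=0$. Additional Value Law: $x^{-1}=\bot\rightarrow 0\cdot x=x$. $\mathsf{Md}$ is the set of equations over $\Sigma_{md}$: $(x+y)+z=x+(y+z)$; $x+y=y+x$; $x+0=x$; $x+(-x)=0$; $(x\cdot y)\cdot z=x\cdot(y\cdot z)$; $x\cdot y=y\cdot x$; $1\cdot x=x$; $x\cdot(y+z)=x\cdot y+x\cdot z$; $(x^{-1})^{-1}=x$; $x\cdot(x\cdot x^{-1})=x$. An involutive cancellation meadow is a $\Sigma_{md}$-structure satisfying $\mathsf{Md}$ and the cancellation law $(x\neq 0\wedge x\cdot y=x\cdot z)\rightarrow y=z$. *)

theory Defs
  imports Main
begin

text \<open>Structures over the signature Sigma_md: a carrier set inside a type together
  with interpretations of 0, 1, +, *, - and inverse (only their values on the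
  carrier matter).\<close>
record 'a md_struct =
  md_carrier :: "'a set"
  md_zero :: 'a
  md_one :: 'a
  md_add :: "'a \<Rightarrow> 'a \<Rightarrow> 'a"
  md_mul :: "'a \<Rightarrow> 'a \<Rightarrow> 'a"
  md_neg :: "'a \<Rightarrow> 'a"
  md_inv :: "'a \<Rightarrow> 'a"

record 'a mdb_struct =
  mb_carrier :: "'a set"
  mb_zero :: 'a
  mb_one :: 'a
  mb_bot :: 'a
  mb_add :: "'a \<Rightarrow> 'a \<Rightarrow> 'a"
  mb_mul :: "'a \<Rightarrow> 'a \<Rightarrow> 'a"
  mb_neg :: "'a \<Rightarrow> 'a"
  mb_inv :: "'a \<Rightarrow> 'a"

definition is_md_struct :: "'a md_struct \<Rightarrow> bool" where
  "is_md_struct A \<longleftrightarrow>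
     md_zero A \<in> md_carrier A \<and> md_one A \<in> md_carrier A \<and>
     (\<forall>x\<in>md_carrier A. \<forall>y\<in>md_carrier A.
        md_add A x y \<in> md_carrier A \<and> md_mul A x y \<in> md_carrier A) \<and>
     (\<forall>x\<in>md_carrier A. md_neg A x \<in> md_carrier A \<and> md_inv A x \<in> md_carrier A)"

definition is_mdb_struct :: "'a mdb_struct \<Rightarrow> bool" where
  "is_mdb_struct M \<longleftrightarrow>
     mb_zero M \<in> mb_carrier M \<and> mb_one M \<in> mb_carrier M \<and> mb_bot M \<in> mb_carrier M \<and>
     (\<forall>x\<in>mb_carrier M. \<forall>y\<in>mb_carrier M.
        mb_add M x y \<in> mb_carrier M \<and> mb_mul M x y \<in> mb_carrier M) \<and>
     (\<forall>x\<in>mb_carrier M. mb_neg M x \<in> mb_carrier M \<and> mb_inv M x \<in> mb_carrier M)"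

definition sat_Md :: "'a md_struct \<Rightarrow> bool" where
  "sat_Md A \<longleftrightarrow> (let C = md_carrier A; z = md_zero A; e = md_one A;
        p = md_add A; m = md_mul A; n = md_neg A; i = md_inv A in
     (\<forall>x\<in>C. \<forall>y\<in>C. \<forall>w\<in>C. p (p x y) w = p x (p y w)) \<and>
     (\<forall>x\<in>C. \<forall>y\<in>C. p x y = p y x) \<and>
     (\<forall>x\<in>C. p x z = x) \<and>
     (\<forall>x\<in>C. p x (n x) = z) \<and>
     (\<forall>x\<in>C. \<forall>y\<in>C. \<forall>w\<in>C. m (m x y) w = m x (m y w)) \<and>
     (\<forall>x\<in>C. \<forall>y\<in>C. m x y = m y x) \<and>
     (\<forall>x\<in>C. m e x = x) \<and>
     (\<forall>x\<in>C. \<forall>y\<in>C. \<forall>w\<in>C. m x (p y w) = p (m x y) (m x w)) \<and>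
     (\<forall>x\<in>C. i (i x) = x) \<and>
     (\<forall>x\<in>C. m x (m x (i x)) = x))"

definition cancellation_law :: "'a md_struct \<Rightarrow> bool" where
  "cancellation_law A \<longleftrightarrow>
     (\<forall>x\<in>md_carrier A. \<forall>y\<in>md_carrier A. \<forall>w\<in>md_carrier A.
        x \<noteq> md_zero A \<and> md_mul A x y = md_mul A x w \<longrightarrow> y = w)"

definition involutive_cancellation_meadow :: "'a md_struct \<Rightarrow> bool" where
  "involutive_cancellation_meadow A \<longleftrightarrow> is_md_struct A \<and> sat_Md A \<and> cancellation_law A"

definition sat_Md_bot :: "'a mdb_struct \<Rightarrow> bool" where
  "sat_Md_bot M \<longleftrightarrow> (let C = mb_carrier M; z = mb_zero M; e = mb_one M; b = mb_bot M;
        p = mb_add M; m = mb_mul M; n = mb_neg M; i = mb_inv M in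
     (\<forall>x\<in>C. \<forall>y\<in>C. \<forall>w\<in>C. p (p x y) w = p x (p y w)) \<and>
     (\<forall>x\<in>C. \<forall>y\<in>C. p x y = p y x) \<and>
     (\<forall>x\<in>C. p x z = x) \<and>
     (\<forall>x\<in>C. p x (n x) = m z x) \<and>
     (\<forall>x\<in>C. \<forall>y\<in>C. \<forall>w\<in>C. m (m x y) w = m x (m y w)) \<and>
     (\<forall>x\<in>C. \<forall>y\<in>C. m x y = m y x) \<and>
     (\<forall>x\<in>C. m e x = x) \<and>
     (\<forall>x\<in>C. \<forall>y\<in>C. \<forall>w\<in>C. m x (p y w) = p (m x y) (m x w)) \<and>
     (\<forall>x\<in>C. n (n x) = x) \<and>
     (\<forall>x\<in>C. m z (m x x) = m z x) \<and>
     (\<forall>x\<in>C. i (i x) = p x (m z (i x))) \<and>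
     (\<forall>x\<in>C. m x (i x) = p e (m z (i x))) \<and>
     (\<forall>x\<in>C. \<forall>y\<in>C. i (m x y) = m (i x) (i y)) \<and>
     i e = e \<and>
     i z = b \<and>
     (\<forall>x\<in>C. p x b = b) \<and>
     (\<forall>x\<in>C. m x b = b))"

definition normal_value_law :: "'a mdb_struct \<Rightarrow> bool" where
  "normal_value_law M \<longleftrightarrow>
     (\<forall>x\<in>mb_carrier M. x \<noteq> mb_bot M \<longrightarrow> mb_mul M (mb_zero M) x = mb_zero M)"

definition additional_value_law :: "'a mdb_struct \<Rightarrow> bool" where
  "additional_value_law M \<longleftrightarrow>
     (\<forall>x\<in>mb_carrier M. mb_inv M x = mb_bot M \<longrightarrow> mb_mul M (mb_zero M) x = x)"

definition in_class_M :: "'a mdb_struct \<Rightarrow> bool" where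
  "in_class_M M \<longleftrightarrow> is_mdb_struct M \<and> sat_Md_bot M \<and> normal_value_law M \<and>
     additional_value_law M \<and> mb_zero M \<noteq> mb_one M"

definition extend_bot :: "'a md_struct \<Rightarrow> 'a \<Rightarrow> 'a mdb_struct" where
  "extend_bot A b =
     \<lparr> mb_carrier = insert b (md_carrier A),
       mb_zero = md_zero A, mb_one = md_one A, mb_bot = b,
       mb_add = (\<lambda>x y. if x = b \<or> y = b then b else md_add A x y),
       mb_mul = (\<lambda>x y. if x = b \<or> y = b then b else md_mul A x y),
       mb_neg = (\<lambda>x. if x = b then b else md_neg A x),
       mb_inv = (\<lambda>x. if x = b \<or> x = md_zero A then b else md_inv A x) \<rparr>"

definition remove_bot :: "'a mdb_struct \<Rightarrow> 'a md_struct" where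
  "remove_bot M =
     \<lparr> md_carrier = mb_carrier M - {mb_bot M},
       md_zero = mb_zero M, md_one = mb_one M,
       md_add = mb_add M, md_mul = mb_mul M, md_neg = mb_neg M,
       md_inv = (\<lambda>x. if x = mb_zero M then mb_zero M else mb_inv M x) \<rparr>"

definition md_same :: "'a md_struct \<Rightarrow> 'a md_struct \<Rightarrow> bool" where
  "md_same A B \<longleftrightarrow> md_carrier A = md_carrier B \<and>
     md_zero A = md_zero B \<and> md_one A = md_one B \<and>
     (\<forall>x\<in>md_carrier A. \<forall>y\<in>md_carrier A.
        md_add A x y = md_add B x y \<and> md_mul A x y = md_mul B x y) \<and>
     (\<forall>x\<in>md_carrier A. md_neg A x = md_neg B x \<and> md_inv A x = md_inv B x)"

definition mdb_same :: "'a mdb_struct \<Rightarrow> 'a mdb_struct \<Rightarrow> bool" where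
  "mdb_same M N \<longleftrightarrow> mb_carrier M = mb_carrier N \<and>
     mb_zero M = mb_zero N \<and> mb_one M = mb_one N \<and> mb_bot M = mb_bot N \<and>
     (\<forall>x\<in>mb_carrier M. \<forall>y\<in>mb_carrier M.
        mb_add M x y = mb_add N x y \<and> mb_mul M x y = mb_mul N x y) \<and>
     (\<forall>x\<in>mb_carrier M. mb_neg M x = mb_neg N x \<and> mb_inv M x = mb_inv N x)"

end

theory Submission
  imports Defs
begin

locale icm =
  fixes A :: "'a md_struct"
  assumes icm: "involutive_cancellation_meadow A"
begin
abbreviation "C \<equiv> md_carrier A"
abbreviation "z \<equiv> md_zero A"
abbreviation "e \<equiv> md_one A"
abbreviation "p \<equiv> md_add A"
abbreviation "m \<equiv> md_mul A"
abbreviation "n \<equiv> md_neg A"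
abbreviation "i \<equiv> md_inv A"

lemma st: "z \<in> C" "e \<in> C" "\<And>x y. x \<in> C \<Longrightarrow> y \<in> C \<Longrightarrow> p x y \<in> C"
  "\<And>x y. x \<in> C \<Longrightarrow> y \<in> C \<Longrightarrow> m x y \<in> C"
  "\<And>x. x \<in> C \<Longrightarrow> n x \<in> C" "\<And>x. x \<in> C \<Longrightarrow> i x \<in> C"
  using icm unfolding involutive_cancellation_meadow_def is_md_struct_def by auto

lemma ax:
  "\<And>x y w. x\<in>C \<Longrightarrow> y\<in>C \<Longrightarrow> w\<in>C \<Longrightarrow> p (p x y) w = p x (p y w)"
  "\<And>x y. x\<in>C \<Longrightarrow> y\<in>C \<Longrightarrow> p x y = p y x"
  "\<And>x. x\<in>C \<Longrightarrow> p x z = x"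
  "\<And>x. x\<in>C \<Longrightarrow> p x (n x) = z"
  "\<And>x y w. x\<in>C \<Longrightarrow> y\<in>C \<Longrightarrow> w\<in>C \<Longrightarrow> m (m x y) w = m x (m y w)"
  "\<And>x y. x\<in>C \<Longrightarrow> y\<in>C \<Longrightarrow> m x y = m y x"
  "\<And>x. x\<in>C \<Longrightarrow> m e x = x"
  "\<And>x y w. x\<in>C \<Longrightarrow> y\<in>C \<Longrightarrow> w\<in>C \<Longrightarrow> m x (p y w) = p (m x y) (m x w)"
  "\<And>x. x\<in>C \<Longrightarrow> i (i x) = x"
  "\<And>x. x\<in>C \<Longrightarrow> m x (m x (i x)) = x"
  using icm unfolding involutive_cancellation_meadow_def sat_Md_def Let_def by auto

lemma canc: "x \<in> C \<Longrightarrow> y \<in> C \<Longrightarrow> w \<in> C \<Longrightarrow> x \<noteq> z \<Longrightarrow> m x y = m x w \<Longrightarrow> y = w"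
  using icm unfolding involutive_cancellation_meadow_def cancellation_law_def by blast

lemma addcanc: assumes "x \<in> C" "y \<in> C" "w \<in> C" "p x y = p x w" shows "y = w"
proof -
  have "p (n x) (p x y) = p (n x) (p x w)" using assms by simp
  then show ?thesis using assms st ax by (metis)
qed

lemma mz: "x \<in> C \<Longrightarrow> m x z = z"
proof -
  assume x: "x \<in> C"
  have "m x z = m x (p z z)" using ax(3) st by simp
  also have "\<dots> = p (m x z) (m x z)" using ax(8) st x by simp
  finally have "p (m x z) z = p (m x z) (m x z)" using ax(3) st x by metis
  then show ?thesis using addcanc st x by metis
qed

lemma mz': "x \<in> C \<Longrightarrow> m z x = z" using mz ax(6) st by metis

lemma inv1: "x \<in> C \<Longrightarrow> x \<noteq> z \<Longrightarrow> m x (i x) = e"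
  using canc[of x "m x (i x)" e] ax(10) ax(6) ax(7) st by metis

lemma invz: assumes "z \<noteq> e" shows "i z = z"
proof (rule ccontr)
  assume h: "i z \<noteq> z"
  have "m (i z) (i (i z)) = e" using inv1 h st by metis
  then have "m (i z) z = e" using ax(9) st by metis
  then show False using mz st assms by metis
qed

lemma invnz: "x \<in> C \<Longrightarrow> x \<noteq> z \<Longrightarrow> z \<noteq> e \<Longrightarrow> i x \<noteq> z"
  using inv1 mz by metis

lemma nozd: "x \<in> C \<Longrightarrow> y \<in> C \<Longrightarrow> x \<noteq> z \<Longrightarrow> y \<noteq> z \<Longrightarrow> m x y \<noteq> z"
  using canc mz st by metis

lemma invmul: assumes "x \<in> C" "y \<in> C" "x \<noteq> z" "y \<noteq> z"
  shows "i (m x y) = m (i x) (i y)"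
proof -
  have xy: "m x y \<in> C" "m x y \<noteq> z" using assms st nozd by auto
  have "m (m x y) (m (i x) (i y)) = m (m x (i x)) (m y (i y))"
    using assms st ax(5) ax(6) by metis
  also have "\<dots> = e" using inv1 assms st ax(7) by metis
  finally show ?thesis using canc[of "m x y" "i (m x y)" "m (i x) (i y)"] inv1 xy assms st
    by metis
qed

lemma negneg: "x \<in> C \<Longrightarrow> n (n x) = x"
proof -
  assume x: "x \<in> C"
  have "p (n x) (n (n x)) = p (n x) x" using ax(4) ax(2) st x by metis
  then show ?thesis using addcanc st x by metis
qed

lemma inv_e: "i e = e" using ax(10)[of e] ax(7) st by metis
end

lemma dir1:
  assumes "involutive_cancellation_meadow A" "md_zero A \<noteq> md_one A" "b \<notin> md_carrier A"
  shows "in_class_M (extend_bot A b) \<and> md_same (remove_bot (extend_bot A b)) A"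
proof -
  interpret icm A using assms(1) by unfold_locales
  have bz: "z \<noteq> b" "e \<noteq> b" using st assms(3) by auto
  have s: "is_mdb_struct (extend_bot A b)"
    unfolding is_mdb_struct_def extend_bot_def using st by auto
  define P where "P = (\<lambda>x y. if x = b \<or> y = b then b else p x y)"
  define Mu where "Mu = (\<lambda>x y. if x = b \<or> y = b then b else m x y)"
  define N where "N = (\<lambda>x. if x = b then b else n x)"
  define I where "I = (\<lambda>x. if x = b \<or> x = z then b else i x)"
  define D where "D = insert b C"
  have E: "extend_bot A b = \<lparr> mb_carrier = D, mb_zero = z, mb_one = e, mb_bot = b,
       mb_add = P, mb_mul = Mu, mb_neg = N, mb_inv = I \<rparr>"
    unfolding extend_bot_def P_def Mu_def N_def I_def D_def by simp
  have cl: "\<And>x y. x \<in> C \<Longrightarrow> y \<in> C \<Longrightarrow> p x y \<noteq> b \<and> m x y \<noteq> b"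
       "\<And>x. x \<in> C \<Longrightarrow> n x \<noteq> b \<and> i x \<noteq> b" using st assms(3) by metis+
  have zz: "i z = z" using invz assms(2) .
  have "sat_Md_bot (extend_bot A b)"
    unfolding E sat_Md_bot_def Let_def mdb_struct.simps
  proof (intro conjI)
    show "\<forall>x\<in>D. \<forall>y\<in>D. \<forall>w\<in>D. P (P x y) w = P x (P y w)"
      unfolding D_def P_def using ax(1) cl by auto
    show "\<forall>x\<in>D. \<forall>y\<in>D. P x y = P y x"
      unfolding D_def P_def using ax(2) by auto
    show "\<forall>x\<in>D. P x z = x"
      unfolding D_def P_def using ax(3) bz by auto
    show "\<forall>x\<in>D. P x (N x) = Mu z x"
      unfolding D_def P_def N_def Mu_def using ax(4) bz cl mz' by auto
    show "\<forall>x\<in>D. \<forall>y\<in>D. \<forall>w\<in>D. Mu (Mu x y) w = Mu x (Mu y w)"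
      unfolding D_def Mu_def using ax(5) cl by auto
    show "\<forall>x\<in>D. \<forall>y\<in>D. Mu x y = Mu y x"
      unfolding D_def Mu_def using ax(6) by auto
    show "\<forall>x\<in>D. Mu e x = x"
      unfolding D_def Mu_def using ax(7) bz by auto
    show "\<forall>x\<in>D. \<forall>y\<in>D. \<forall>w\<in>D. Mu x (P y w) = P (Mu x y) (Mu x w)"
      unfolding D_def Mu_def P_def using ax(8) cl by auto
    show "\<forall>x\<in>D. N (N x) = x"
      unfolding D_def N_def using negneg cl by auto
    show "\<forall>x\<in>D. Mu z (Mu x x) = Mu z x"
      unfolding D_def Mu_def using mz' cl bz st by auto
    show "\<forall>x\<in>D. I (I x) = P x (Mu z (I x))"
      unfolding D_def Mu_def P_def I_def using ax(9) ax(3) mz' cl bz st invnz assms(2) by auto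
    show "\<forall>x\<in>D. Mu x (I x) = P e (Mu z (I x))"
      unfolding D_def Mu_def P_def I_def using inv1 ax(3) mz' cl bz st by auto
    show "\<forall>x\<in>D. \<forall>y\<in>D. I (Mu x y) = Mu (I x) (I y)"
      unfolding D_def Mu_def I_def using invmul cl bz st mz mz' nozd by auto
    show "I e = e" unfolding I_def using inv_e bz assms(2) by auto
    show "I z = b" unfolding I_def by auto
    show "\<forall>x\<in>D. P x b = b" unfolding P_def by auto
    show "\<forall>x\<in>D. Mu x b = b" unfolding Mu_def by auto
  qed
  moreover have "is_mdb_struct (extend_bot A b)"
    unfolding E is_mdb_struct_def mdb_struct.simps D_def P_def Mu_def N_def I_def
    using st by auto
  moreover have "normal_value_law (extend_bot A b)"
    unfolding E normal_value_law_def mdb_struct.simps D_def Mu_def using mz' bz by auto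
  moreover have "additional_value_law (extend_bot A b)"
    unfolding E additional_value_law_def mdb_struct.simps D_def Mu_def I_def
    using mz' bz cl by auto
  moreover have "md_same (remove_bot (extend_bot A b)) A"
    unfolding E remove_bot_def md_same_def md_struct.simps mdb_struct.simps D_def
      P_def Mu_def N_def I_def using assms(3) zz by auto
  ultimately show ?thesis unfolding in_class_M_def using assms(2) E by simp
qed

lemma dir2:
  fixes M :: "'a mdb_struct"
  assumes H: "in_class_M M"
  shows "involutive_cancellation_meadow (remove_bot M) \<and>
              md_zero (remove_bot M) \<noteq> md_one (remove_bot M) \<and>
              mb_bot M \<notin> md_carrier (remove_bot M) \<and>
              mdb_same (extend_bot (remove_bot M) (mb_bot M)) M"
proof -
  define C where "C = mb_carrier M"
  define z where "z = mb_zero M"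
  define e where "e = mb_one M"
  define b where "b = mb_bot M"
  define p where "p = mb_add M"
  define m where "m = mb_mul M"
  define n where "n = mb_neg M"
  define i where "i = mb_inv M"
  have st: "z \<in> C" "e \<in> C" "b \<in> C" "\<And>x y. x \<in> C \<Longrightarrow> y \<in> C \<Longrightarrow> p x y \<in> C"
    "\<And>x y. x \<in> C \<Longrightarrow> y \<in> C \<Longrightarrow> m x y \<in> C"
    "\<And>x. x \<in> C \<Longrightarrow> n x \<in> C" "\<And>x. x \<in> C \<Longrightarrow> i x \<in> C"
    using H unfolding in_class_M_def is_mdb_struct_def C_def z_def e_def b_def p_def m_def n_def i_def
    by auto
  have ax:
    "\<And>x y w. x\<in>C \<Longrightarrow> y\<in>C \<Longrightarrow> w\<in>C \<Longrightarrow> p (p x y) w = p x (p y w)"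
    "\<And>x y. x\<in>C \<Longrightarrow> y\<in>C \<Longrightarrow> p x y = p y x"
    "\<And>x. x\<in>C \<Longrightarrow> p x z = x"
    "\<And>x. x\<in>C \<Longrightarrow> p x (n x) = m z x"
    "\<And>x y w. x\<in>C \<Longrightarrow> y\<in>C \<Longrightarrow> w\<in>C \<Longrightarrow> m (m x y) w = m x (m y w)"
    "\<And>x y. x\<in>C \<Longrightarrow> y\<in>C \<Longrightarrow> m x y = m y x"
    "\<And>x. x\<in>C \<Longrightarrow> m e x = x"
    "\<And>x y w. x\<in>C \<Longrightarrow> y\<in>C \<Longrightarrow> w\<in>C \<Longrightarrow> m x (p y w) = p (m x y) (m x w)"
    "\<And>x. x\<in>C \<Longrightarrow> n (n x) = x"
    "\<And>x. x\<in>C \<Longrightarrow> m z (m x x) = m z x"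
    "\<And>x. x\<in>C \<Longrightarrow> i (i x) = p x (m z (i x))"
    "\<And>x. x\<in>C \<Longrightarrow> m x (i x) = p e (m z (i x))"
    "\<And>x y. x\<in>C \<Longrightarrow> y\<in>C \<Longrightarrow> i (m x y) = m (i x) (i y)"
    "i e = e" "i z = b"
    "\<And>x. x\<in>C \<Longrightarrow> p x b = b"
    "\<And>x. x\<in>C \<Longrightarrow> m x b = b"
    using H unfolding in_class_M_def sat_Md_bot_def Let_def C_def z_def e_def b_def p_def m_def n_def i_def
    by auto
  have nv: "\<And>x. x \<in> C \<Longrightarrow> x \<noteq> b \<Longrightarrow> m z x = z"
    using H unfolding in_class_M_def normal_value_law_def C_def z_def b_def m_def by auto
  have av: "\<And>x. x \<in> C \<Longrightarrow> i x = b \<Longrightarrow> m z x = x"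
    using H unfolding in_class_M_def additional_value_law_def C_def z_def b_def m_def i_def by auto
  have ze: "z \<noteq> e" using H unfolding in_class_M_def z_def e_def by auto
  have zb: "z \<noteq> b" using ax(3)[of e] ax(16)[of e] st ze by auto
  have eb: "e \<noteq> b" using ax(7)[of z] ax(17)[of z] ax(6)[of z e] st ze by auto
  have zbb: "m z b = b" using ax(17) st by auto
  have pcl: "\<And>x y. x \<in> C \<Longrightarrow> y \<in> C \<Longrightarrow> x \<noteq> b \<Longrightarrow> y \<noteq> b \<Longrightarrow> p x y \<noteq> b"
  proof
    fix x y assume a: "x \<in> C" "y \<in> C" "x \<noteq> b" "y \<noteq> b" "p x y = b"
    have "m z (p x y) = p (m z x) (m z y)" using ax(8) a st by auto
    then have "b = p z z" using a nv zbb by auto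
    then show False using ax(3) st zb by auto
  qed
  have mcl: "\<And>x y. x \<in> C \<Longrightarrow> y \<in> C \<Longrightarrow> x \<noteq> b \<Longrightarrow> y \<noteq> b \<Longrightarrow> m x y \<noteq> b"
  proof
    fix x y assume a: "x \<in> C" "y \<in> C" "x \<noteq> b" "y \<noteq> b" "m x y = b"
    have "m z (m x y) = m (m z x) y" using ax(5) a st by auto
    then have "b = z" using a nv zbb by auto
    then show False using zb by auto
  qed
  have ncl: "\<And>x. x \<in> C \<Longrightarrow> x \<noteq> b \<Longrightarrow> n x \<noteq> b"
  proof
    fix x assume a: "x \<in> C" "x \<noteq> b" "n x = b"
    have "p x (n x) = z" using ax(4) nv a by auto
    then show False using a ax(16) zb by auto
  qed
  have icl: "\<And>x. x \<in> C \<Longrightarrow> x \<noteq> b \<Longrightarrow> x \<noteq> z \<Longrightarrow> i x \<noteq> b"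
    using av nv by metis
  have inz: "\<And>x. x \<in> C \<Longrightarrow> x \<noteq> b \<Longrightarrow> x \<noteq> z \<Longrightarrow> i x \<noteq> z"
  proof
    fix x assume a: "x \<in> C" "x \<noteq> b" "x \<noteq> z" "i x = z"
    have "m z z = z" using nv st zb by auto
    then have "i (i x) = x" using ax(11)[of x] a ax(3) by simp
    then show False using a ax(15) by auto
  qed
  have ii: "\<And>x. x \<in> C \<Longrightarrow> x \<noteq> b \<Longrightarrow> x \<noteq> z \<Longrightarrow> i (i x) = x"
    using ax(11) nv ax(3) st icl by metis
  have xi: "\<And>x. x \<in> C \<Longrightarrow> x \<noteq> b \<Longrightarrow> x \<noteq> z \<Longrightarrow> m x (i x) = e"
    using ax(12) nv ax(3) st icl by metis
  have nb: "n b = b"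
  proof (rule ccontr)
    assume c: "n b \<noteq> b"
    have "p (n b) (n (n b)) = m z (n b)" using ax(4) st by auto
    then have "b = z" using c nv st ax(9) ax(2) ax(16) by metis
    then show False using zb by auto
  qed
  have ib: "i b = b"
  proof (rule ccontr)
    assume c: "i b \<noteq> b"
    have "i (i b) = b" using ax(11)[of b] st ax(2) ax(16) by metis
    then have "m z (i b) = i b" using av st by auto
    then have "i b = z" using nv c st by auto
    then have "m b z = p e (m z z)" using ax(12)[of b] st by auto
    then have "b = e" using ax(6)[of b z] st zbb nv zb ax(3) ax(2) by metis
    then show False using eb by auto
  qed
  define C' where "C' = C - {b}"
  define i' where "i' = (\<lambda>x. if x = z then z else i x)"
  have R: "remove_bot M = \<lparr> md_carrier = C', md_zero = z, md_one = e,
       md_add = p, md_mul = m, md_neg = n, md_inv = i' \<rparr>"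
    unfolding remove_bot_def C'_def i'_def C_def z_def e_def b_def p_def m_def n_def i_def by simp
  have s: "is_md_struct (remove_bot M)"
    unfolding R is_md_struct_def md_struct.simps C'_def i'_def
    using st zb eb pcl mcl ncl icl by auto
  have sat: "sat_Md (remove_bot M)"
    unfolding R sat_Md_def Let_def md_struct.simps
  proof (intro conjI)
    show "\<forall>x\<in>C'. \<forall>y\<in>C'. \<forall>w\<in>C'. p (p x y) w = p x (p y w)" using ax(1) C'_def by auto
    show "\<forall>x\<in>C'. \<forall>y\<in>C'. p x y = p y x" using ax(2) C'_def by auto
    show "\<forall>x\<in>C'. p x z = x" using ax(3) C'_def by auto
    show "\<forall>x\<in>C'. p x (n x) = z" using ax(4) nv C'_def by auto
    show "\<forall>x\<in>C'. \<forall>y\<in>C'. \<forall>w\<in>C'. m (m x y) w = m x (m y w)" using ax(5) C'_def by auto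
    show "\<forall>x\<in>C'. \<forall>y\<in>C'. m x y = m y x" using ax(6) C'_def by auto
    show "\<forall>x\<in>C'. m e x = x" using ax(7) C'_def by auto
    show "\<forall>x\<in>C'. \<forall>y\<in>C'. \<forall>w\<in>C'. m x (p y w) = p (m x y) (m x w)" using ax(8) C'_def by auto
    show "\<forall>x\<in>C'. i' (i' x) = x" using ii inz C'_def i'_def by auto
    show "\<forall>x\<in>C'. m x (m x (i' x)) = x"
    proof
      fix x assume x: "x \<in> C'"
      show "m x (m x (i' x)) = x"
      proof (cases "x = z")
        case True then show ?thesis using nv st zb i'_def by auto
      next
        case False
        have "x \<in> C" "x \<noteq> b" using x C'_def by auto
        have "m x e = m e x" using ax(6) st \<open>x \<in> C\<close> by blast
        then have "m x (i x) = e" "m x e = x" using xi False ax(7) \<open>x \<in> C\<close> \<open>x \<noteq> b\<close> by auto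
        then show ?thesis using False i'_def by simp
      qed
    qed
  qed
  have can: "cancellation_law (remove_bot M)"
    unfolding R cancellation_law_def md_struct.simps
  proof (intro ballI impI)
    fix x y w assume a: "x \<in> C'" "y \<in> C'" "w \<in> C'" "x \<noteq> z \<and> m x y = m x w"
    have xc: "x \<in> C" "x \<noteq> b" "x \<noteq> z" using a C'_def by auto
    have k: "m (i x) (m x u) = u" if u: "u \<in> C" for u
    proof -
      have "m (i x) (m x u) = m (m (i x) x) u" using ax(5)[of "i x" x u] st xc u by simp
      also have "m (i x) x = m x (i x)" using ax(6)[of "i x" x] st xc by simp
      also have "m x (i x) = e" using xi xc by simp
      finally show ?thesis using ax(7) u by simp
    qed
    have yw: "y \<in> C" "w \<in> C" using a C'_def by auto
    have "y = m (i x) (m x y)" using k[OF yw(1)] by simp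
    also have "\<dots> = m (i x) (m x w)" using a by simp
    also have "\<dots> = w" using k[OF yw(2)] by simp
    finally show "y = w" .
  qed
  have same: "mdb_same (extend_bot (remove_bot M) (mb_bot M)) M"
  proof -
    have pb: "\<And>y. y \<in> C \<Longrightarrow> p b y = b" using ax(2)[of b] ax(16) st(3) by metis
    have mb: "\<And>y. y \<in> C \<Longrightarrow> m b y = b" using ax(6)[of b] ax(17) st(3) by metis
    have cc: "insert b C' = C" using C'_def st(3) by blast
    show ?thesis
    unfolding R extend_bot_def mdb_same_def md_struct.simps mdb_struct.simps
    unfolding C_def[symmetric] z_def[symmetric] e_def[symmetric] b_def[symmetric]
      p_def[symmetric] m_def[symmetric] n_def[symmetric] i_def[symmetric] cc
    proof (intro conjI ballI refl)
      fix x y assume x: "x \<in> C" and y: "y \<in> C"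
      show "(if x = b \<or> y = b then b else p x y) = p x y" using pb mb ax(16) ax(17) x y by auto
      show "(if x = b \<or> y = b then b else m x y) = m x y" using pb mb ax(16) ax(17) x y by auto
    next
      fix x assume x: "x \<in> C"
      show "(if x = b then b else n x) = n x" using nb by auto
      show "(if x = b \<or> x = z then b else i' x) = i x" using ib ax(15) i'_def by auto
    qed
  qed
  show ?thesis using s sat can same ze R C'_def b_def
    unfolding involutive_cancellation_meadow_def by auto
qed

theorem theorem3p2:
  shows "(\<forall>(A :: 'a md_struct) (b :: 'a).
            involutive_cancellation_meadow A \<and> md_zero A \<noteq> md_one A \<and> b \<notin> md_carrier A \<longrightarrow>
              in_class_M (extend_bot A b) \<and> md_same (remove_bot (extend_bot A b)) A) \<and>
         (\<forall>(M :: 'a mdb_struct).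
            in_class_M M \<longrightarrow>
              involutive_cancellation_meadow (remove_bot M) \<and>
              md_zero (remove_bot M) \<noteq> md_one (remove_bot M) \<and>
              mb_bot M \<notin> md_carrier (remove_bot M) \<and>
              mdb_same (extend_bot (remove_bot M) (mb_bot M)) M)"
proof (rule conjI; intro allI impI)
  fix A :: "'a md_struct" and b :: 'a
  assume h: "involutive_cancellation_meadow A \<and> md_zero A \<noteq> md_one A \<and> b \<notin> md_carrier A"
  then have h1: "involutive_cancellation_meadow A" and h2: "md_zero A \<noteq> md_one A"
    and h3: "b \<notin> md_carrier A" by simp_all
  show "in_class_M (extend_bot A b) \<and> md_same (remove_bot (extend_bot A b)) A"
    by (rule dir1[OF h1 h2 h3])
next
  fix M :: "'a mdb_struct" assume "in_class_M M"
  then show "involutive_cancellation_meadow (remove_bot M) \<and>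
              md_zero (remove_bot M) \<noteq> md_one (remove_bot M) \<and>
              mb_bot M \<notin> md_carrier (remove_bot M) \<and>
              mdb_same (extend_bot (remove_bot M) (mb_bot M)) M" by (rule dir2)
qed

end
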